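(* Consider the problem of steering $\dot x=Ax+u b$, $|u(t)|\le1$, from $(0,0,0)$ to $(\gamma,0,\gamma)$ in minimum time, where $$A=\begin{pmatrix}0&1&0\\-1&0&1\\0&0&0\end{pmatrix},\qquad b=(0,0,1)^T,\qquad \gamma>0.$$ (i) If $2(\rho-1)\pi<\gamma<2\rho\pi$ for some integer $\rho\ge1$, the unique optimal control has exactly $2\rho$ switchings and is $$u(t)=(-1)^{j-1},\quad t_{j-1}<t<t_j,\quad j=1,\dots,2\rho+1,$$ with $t_0=0$, where the interval lengths $\tau_j=t_j-t_{j-1}$ satisfy: $\tau_1=\tau_{2\rho+1}=\tau$, where $\tau\in(0,\pi)$ is the unique solution in $(0,\pi)$ of $$\frac{2\tau+2(\rho-1)\pi-\gamma}{2\rho-1}=2\tan^{-1}\!\Big(\frac{\sin\tau}{2\rho-\cos\tau}\Big)$$ (with $\tan^{-1}$ taking values in $(-\pi/2,\pi/2)$); $$\tau_{2k}=\frac{2\tau+2(\rho-1)\pi-\gamma}{2\rho-1},\quad k=1,\dots,\rho;\qquad \tau_{2k+1}=2\pi-\tau_{2k+2}=\frac{2\rho\pi-2\tau+\gamma}{2\rho-1},\quad k=1,\dots,\rho-1.$$ The minimum transfer time is $$t_{2\rho+1}=\frac{4\rho[\tau+(\rho-1)\pi]-\gamma}{2\rho-1}.$$ (ii) If $\gamma=2\rho\pi$ for some integer $\rho\ge1$, the optimal control is $u(t)\equiv1$ and the minimum time is $2\rho\pi$.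
   Context: Controls are measurable functions with values in $[-1,1]$; the terminal time is free. *)

theory Defs
  imports "HOL-Analysis.Analysis"
begin

definition Amat :: "real^3^3" where
  "Amat = vector [vector [0, 1, 0], vector [-1, 0, 1], vector [0, 0, 0]]"

definition bvec :: "real^3" where
  "bvec = vector [0, 0, 1]"

definition admissible :: "(real \<Rightarrow> real) \<Rightarrow> bool" where
  "admissible u \<longleftrightarrow> u \<in> borel_measurable lebesgue \<and> (\<forall>t. \<bar>u t\<bar> \<le> 1)"

text \<open>u steers x0 to x1 in time T: there is an (absolutely continuous, Caratheodory)
  solution of x' = A x + u b on [0,T] with x(0)=x0, x(T)=x1.\<close>
definition steers :: "(real \<Rightarrow> real) \<Rightarrow> real \<Rightarrow> real^3 \<Rightarrow> real^3 \<Rightarrow> bool" where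
  "steers u T x0 x1 \<longleftrightarrow> 0 \<le> T \<and> (\<exists>x :: real \<Rightarrow> real^3. x 0 = x0 \<and> x T = x1 \<and>
     (\<forall>t\<in>{0..T}. ((\<lambda>s. Amat *v x s + u s *\<^sub>R bvec) has_integral (x t - x0)) {0..t}))"

definition reachable_in :: "real \<Rightarrow> real^3 \<Rightarrow> real^3 \<Rightarrow> bool" where
  "reachable_in T x0 x1 \<longleftrightarrow> (\<exists>u. admissible u \<and> steers u T x0 x1)"

definition min_time :: "real \<Rightarrow> real^3 \<Rightarrow> real^3 \<Rightarrow> bool" where
  "min_time T x0 x1 \<longleftrightarrow> reachable_in T x0 x1 \<and> (\<forall>T'. 0 \<le> T' \<and> T' < T \<longrightarrow> \<not> reachable_in T' x0 x1)"

definition sw_len :: "nat \<Rightarrow> real \<Rightarrow> real \<Rightarrow> nat \<Rightarrow> real" where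
  "sw_len \<rho> \<gamma> \<tau> j =
     (if j = 1 \<or> j = 2*\<rho>+1 then \<tau>
      else if even j then (2*\<tau> + 2*(real \<rho> - 1)*pi - \<gamma>) / (2*real \<rho> - 1)
      else (2*real \<rho>*pi - 2*\<tau> + \<gamma>) / (2*real \<rho> - 1))"

definition sw_time :: "nat \<Rightarrow> real \<Rightarrow> real \<Rightarrow> nat \<Rightarrow> real" where
  "sw_time \<rho> \<gamma> \<tau> j = (\<Sum>i\<in>{1..j}. sw_len \<rho> \<gamma> \<tau> i)"

end

theory Submission
  imports Defs
begin

lemma lebesgue_sf: "sigma_finite_measure (lebesgue :: real measure)"
proof
  obtain A :: "real set set" where "countable A" "A \<subseteq> sets lborel" "\<Union>A = space lborel" "\<forall>a\<in>A. emeasure lborel a \<noteq> \<infinity>"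
    using lborel.sigma_finite_countable by metis
  then show "\<exists>A. countable A \<and> A \<subseteq> sets (lebesgue :: real measure) \<and> \<Union> A = space lebesgue \<and> (\<forall>a\<in>A. emeasure lebesgue a \<noteq> \<infinity>)"
    by (intro exI[of _ A]) auto
qed

interpretation leb_pair: pair_sigma_finite "lebesgue :: real measure" "lebesgue :: real measure"
  by (simp add: lebesgue_sf pair_sigma_finite.intro)


lemma id_leb: "(\<lambda>x::real. x) \<in> borel_measurable lebesgue"
  by (rule measurable_completion) simp

lemma cont_meas: "continuous_on UNIV (f::real\<Rightarrow>real) \<Longrightarrow> f \<in> borel_measurable lebesgue"
  by (simp add: borel_measurable_continuous_onI measurable_completion)

lemma seti_bounded:
  fixes f :: "real \<Rightarrow> real"
  assumes "f \<in> borel_measurable lebesgue" "\<And>x. x \<in> {a..b} \<Longrightarrow> \<bar>f x\<bar> \<le> B"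
  shows "set_integrable lebesgue {a..b} f"
  unfolding set_integrable_def
  apply (rule integrableI_bounded_set_indicator[where B=B])
  using assms by (auto simp: emeasure_lborel_Icc_eq)

lemma vint:
  fixes v h :: "real \<Rightarrow> real"
  assumes vm: "v \<in> borel_measurable lebesgue" and vb: "\<And>s. \<bar>v s\<bar> \<le> 1" and hc: "continuous_on UNIV h"
  shows "set_integrable lebesgue {a..b} (\<lambda>s. v s * h s)"
proof -
  have hc': "continuous_on {a..b} h" by (rule continuous_on_subset[OF hc]) simp
  obtain B where B: "\<And>x. x \<in> {a..b} \<Longrightarrow> norm (h x) \<le> B"
    using continuous_on_compact_bound[OF compact_Icc hc'] by metis
  have hm: "h \<in> borel_measurable lebesgue" using hc by (rule cont_meas)
  show ?thesis
  proof (rule seti_bounded[where B=B])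
    show "(\<lambda>s. v s * h s) \<in> borel_measurable lebesgue" using vm hm by (rule borel_measurable_times)
    fix x assume "x \<in> {a..b}"
    then have "\<bar>h x\<bar> \<le> B" using B by auto
    then have "\<bar>v x\<bar> * \<bar>h x\<bar> \<le> 1 * B" using vb[of x]
      by (intro mult_mono) auto
    then show "\<bar>v x * h x\<bar> \<le> B" by (simp add: abs_mult)
  qed
qed

lemma vint_HK:
  fixes v h :: "real \<Rightarrow> real"
  assumes vm: "v \<in> borel_measurable lebesgue" and vb: "\<And>s. \<bar>v s\<bar> \<le> 1" and hc: "continuous_on UNIV h"
  shows "(\<lambda>s. v s * h s) integrable_on {a..b}"
    "(LINT s:{a..b}|lebesgue. v s * h s) = integral {a..b} (\<lambda>s. v s * h s)"
  using set_lebesgue_integral_eq_integral[OF vint[OF assms]] by auto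

lemma ibp:
  fixes v g g' :: "real \<Rightarrow> real"
  assumes vm: "v \<in> borel_measurable lebesgue" and vb: "\<And>s. \<bar>v s\<bar> \<le> 1" and T: "0 \<le> T"
    and gd: "\<And>x. (g has_real_derivative g' x) (at x)" and gc: "continuous_on UNIV g'"
  shows "integral {0..T} (\<lambda>s. v s * g s) = g T * integral {0..T} v - integral {0..T} (\<lambda>r. g' r * integral {0..r} v)"
proof -
  define F where "F = (\<lambda>(s::real) (r::real). if 0 \<le> s \<and> s \<le> r \<and> r \<le> T then v s * g' r else 0)"
  have gcont: "continuous_on UNIV g"
    using gd by (meson DERIV_continuous continuous_at_imp_continuous_on)
  have g'm: "g' \<in> borel_measurable lebesgue" using gc by (rule cont_meas)
  have gc': "continuous_on {0..T} g'" by (rule continuous_on_subset[OF gc]) simp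
  obtain B where B: "\<And>x. x \<in> {0..T} \<Longrightarrow> norm (g' x) \<le> B"
    using continuous_on_compact_bound[OF compact_Icc gc'] by metis
  have m1: "(\<lambda>p::real\<times>real. fst p) \<in> borel_measurable (lebesgue \<Otimes>\<^sub>M lebesgue)"
    by (rule measurable_compose[OF measurable_fst id_leb])
  have m2: "(\<lambda>p::real\<times>real. snd p) \<in> borel_measurable (lebesgue \<Otimes>\<^sub>M lebesgue)"
    by (rule measurable_compose[OF measurable_snd id_leb])
  have m3: "(\<lambda>p::real\<times>real. v (fst p) * g' (snd p)) \<in> borel_measurable (lebesgue \<Otimes>\<^sub>M lebesgue)"
    by (intro borel_measurable_times measurable_compose[OF measurable_fst vm] measurable_compose[OF measurable_snd g'm])
  have pr: "Measurable.pred (lebesgue \<Otimes>\<^sub>M lebesgue) (\<lambda>p::real\<times>real. 0 \<le> fst p \<and> fst p \<le> snd p \<and> snd p \<le> T)"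
    using m1 m2 by measurable
  have Fe: "case_prod F = (\<lambda>p. if 0 \<le> fst p \<and> fst p \<le> snd p \<and> snd p \<le> T then v (fst p) * g' (snd p) else 0)"
    by (auto simp: fun_eq_iff F_def)
  have Fm: "case_prod F \<in> borel_measurable (lebesgue \<Otimes>\<^sub>M lebesgue)"
    unfolding Fe using m3 pr by measurable
  have Fint: "integrable (lebesgue \<Otimes>\<^sub>M lebesgue) (case_prod F)"
  proof (rule integrableI_bounded_set[where A="{0..T} \<times> {0..T}" and B=B])
    show "{0..T} \<times> {0..T} \<in> sets (lebesgue \<Otimes>\<^sub>M lebesgue)" by auto
    show "emeasure (lebesgue \<Otimes>\<^sub>M lebesgue) ({0..T} \<times> {0..T::real}) < \<infinity>"
      by (subst sigma_finite_measure.emeasure_pair_measure_Times[OF lebesgue_sf]) (auto simp: emeasure_lborel_Icc_eq ennreal_mult_less_top)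
    have bnd: "\<bar>F s r\<bar> \<le> B" if "r \<in> {0..T}" for s r
    proof -
      have "\<bar>g' r\<bar> \<le> B" using B that by auto
      then have "\<bar>v s\<bar> * \<bar>g' r\<bar> \<le> 1 * B" using vb[of s]
        by (intro mult_mono) auto
      then show ?thesis using \<open>\<bar>g' r\<bar> \<le> B\<close>
        unfolding F_def by (auto simp: abs_mult)
    qed
    show "AE x in lebesgue \<Otimes>\<^sub>M lebesgue. x \<in> {0..T} \<times> {0..T} \<longrightarrow> norm (case_prod F x) \<le> B"
      by (rule AE_I2) (auto intro: bnd)
    show "AE x in lebesgue \<Otimes>\<^sub>M lebesgue. x \<notin> {0..T} \<times> {0..T} \<longrightarrow> case_prod F x = 0"
      by (rule AE_I2) (auto simp: F_def split: if_splits)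
  qed (fact Fm)
  have fub: "(\<integral>r. (\<integral>s. F s r \<partial>lebesgue) \<partial>lebesgue) = (\<integral>s. (\<integral>r. F s r \<partial>lebesgue) \<partial>lebesgue)"
    by (rule leb_pair.Fubini_integral[OF Fint])
  have in1: "(\<integral>s. F s r \<partial>lebesgue) = indicator {0..T} r * (g' r * integral {0..r} v)" for r
  proof -
    have "(\<lambda>s. F s r) = (\<lambda>s. indicator {0..T} r * (g' r * (indicator {0..r} s *\<^sub>R v s)))"
      by (auto simp: F_def fun_eq_iff indicator_def)
    then have "(\<integral>s. F s r \<partial>lebesgue) = indicator {0..T} r * (g' r * (LINT s:{0..r}|lebesgue. v s))"
      by (simp add: set_lebesgue_integral_def)
    also have "(LINT s:{0..r}|lebesgue. v s) = integral {0..r} v"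
      using vint_HK(2)[OF vm vb, of "\<lambda>_. 1" 0 r] by simp
    finally show ?thesis .
  qed
  have in2: "(\<integral>r. F s r \<partial>lebesgue) = indicator {0..T} s * (v s * (g T - g s))" for s
  proof -
    have "(\<lambda>r. F s r) = (\<lambda>r. indicator {0..T} s * (v s * (indicator {s..T} r *\<^sub>R g' r)))"
      by (auto simp: F_def fun_eq_iff indicator_def)
    then have "(\<integral>r. F s r \<partial>lebesgue) = indicator {0..T} s * (v s * (LINT r:{s..T}|lebesgue. g' r))"
      by (simp add: set_lebesgue_integral_def)
    also have "(LINT r:{s..T}|lebesgue. g' r) = integral {s..T} g'"
      using vint_HK(2)[of "\<lambda>_. 1" g' s T] gc by simp
    also have "s \<in> {0..T} \<Longrightarrow> integral {s..T} g' = g T - g s"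
      by (intro integral_unique fundamental_theorem_of_calculus)
         (auto simp: has_real_derivative_iff_has_vector_derivative[symmetric] intro: DERIV_subset[OF gd])
    ultimately show ?thesis by (auto simp: indicator_def)
  qed
  have Xc: "continuous_on {0..T} (\<lambda>r. integral {0..r} v)"
    by (rule indefinite_integral_continuous_1) (use vint_HK(1)[OF vm vb, of "\<lambda>_. 1" 0 T] in simp)
  have L: "(\<integral>r. indicator {0..T} r * (g' r * integral {0..r} v) \<partial>lebesgue) = integral {0..T} (\<lambda>r. g' r * integral {0..r} v)"
  proof -
    have c: "continuous_on {0..T} (\<lambda>r. g' r * integral {0..r} v)"
      by (intro continuous_intros Xc continuous_on_subset[OF gc]) auto
    show ?thesis
      using set_lebesgue_integral_eq_integral(2)[OF absolutely_integrable_continuous_real[OF c]]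
      by (simp add: set_lebesgue_integral_def)
  qed
  have R: "(\<integral>s. indicator {0..T} s * (v s * (g T - g s)) \<partial>lebesgue) = integral {0..T} (\<lambda>s. v s * (g T - g s))"
    using vint_HK(2)[OF vm vb, of "\<lambda>s. g T - g s" 0 T] gcont
    by (simp add: set_lebesgue_integral_def continuous_intros)
  have eq: "integral {0..T} (\<lambda>r. g' r * integral {0..r} v) = integral {0..T} (\<lambda>s. v s * (g T - g s))"
    using fub in1 in2 L R by simp
  have i1: "v integrable_on {0..T}" using vint_HK(1)[OF vm vb, of "\<lambda>_. 1" 0 T] by simp
  have i2: "(\<lambda>s. v s * g s) integrable_on {0..T}" using vint_HK(1)[OF vm vb gcont] by simp
  have "integral {0..T} (\<lambda>s. v s * (g T - g s)) = integral {0..T} (\<lambda>s. g T * v s - v s * g s)"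
    by (simp add: algebra_simps)
  also have "\<dots> = g T * integral {0..T} v - integral {0..T} (\<lambda>s. v s * g s)"
    using integral_diff[OF integrable_on_mult_right[OF i1] i2] by simp
  finally show ?thesis using eq by simp
qed

lemma Amat_comp:
  fixes y :: "real^3"
  shows "(Amat *v y + c *\<^sub>R bvec) $ 1 = y $ 2"
    "(Amat *v y + c *\<^sub>R bvec) $ 2 = y $ 3 - y $ 1"
    "(Amat *v y + c *\<^sub>R bvec) $ 3 = c"
  by (simp_all add: Amat_def bvec_def matrix_vector_mult_def sum_3)

lemma Amat_comp2:
  fixes y :: "real^3"
  shows "(Amat *v y) $ 1 = y $ 2" "(Amat *v y) $ 2 = y $ 3 - y $ 1" "(Amat *v y) $ 3 = 0"
    "bvec $ 1 = 0" "bvec $ 2 = 0" "bvec $ 3 = 1"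
  by (simp_all add: Amat_def bvec_def matrix_vector_mult_def sum_3)

lemma vec0: "vector [0,0,0] = (0::real^3)"
  by (simp add: vec_eq_iff forall_3)

lemma moments:
  assumes adm: "admissible v" and st: "steers v T (vector [0,0,0]) (vector [\<gamma>,0,\<gamma>])"
  shows "0 \<le> T" "integral {0..T} v = \<gamma>" "integral {0..T} (\<lambda>s. v s * cos s) = 0"
    "integral {0..T} (\<lambda>s. v s * sin s) = 0"
proof -
  have vm: "v \<in> borel_measurable lebesgue" and vb: "\<And>s. \<bar>v s\<bar> \<le> 1"
    using adm by (auto simp: admissible_def)
  obtain x :: "real \<Rightarrow> real^3" where T: "0 \<le> T" and x0: "x 0 = vector [0,0,0]" and xT: "x T = vector [\<gamma>,0,\<gamma>]"
    and hi: "\<And>t. t \<in> {0..T} \<Longrightarrow> ((\<lambda>s. Amat *v x s + v s *\<^sub>R bvec) has_integral (x t - vector [0,0,0])) {0..t}"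
    using st unfolding steers_def by blast
  show "0 \<le> T" by (fact T)
  define x1 where "x1 = (\<lambda>t. x t $ 1)"
  define x2 where "x2 = (\<lambda>t. x t $ 2)"
  define x3 where "x3 = (\<lambda>t. x t $ 3)"
  have hc: "((\<lambda>s. (Amat *v x s + v s *\<^sub>R bvec) $ i) has_integral (x t $ i)) {0..t}" if "t \<in> {0..T}" for t i
    using has_integral_linear[OF hi[OF that] bounded_linear_vec_nth[of i]] by (simp add: o_def vec0)
  have h1: "(x2 has_integral x1 t) {0..t}" if "t \<in> {0..T}" for t
    using hc[OF that, of 1] by (simp add: Amat_comp2 x1_def x2_def)
  have h2: "((\<lambda>s. x3 s - x1 s) has_integral x2 t) {0..t}" if "t \<in> {0..T}" for t
    using hc[OF that, of 2] by (simp add: Amat_comp2 x1_def x2_def x3_def)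
  have h3: "(v has_integral x3 t) {0..t}" if "t \<in> {0..T}" for t
    using hc[OF that, of 3] by (simp add: Amat_comp2 x3_def)
  have c1: "continuous_on {0..T} x1"
  proof -
    have "continuous_on {0..T} (\<lambda>t. integral {0..t} x2)"
      using h1[of T] T by (intro indefinite_integral_continuous_1) (auto simp: integrable_on_def)
    then show ?thesis by (rule continuous_on_eq) (use h1 in \<open>auto intro: integral_unique\<close>)
  qed
  have c2: "continuous_on {0..T} x2"
  proof -
    have "continuous_on {0..T} (\<lambda>t. integral {0..t} (\<lambda>s. x3 s - x1 s))"
      using h2[of T] T by (intro indefinite_integral_continuous_1) (auto simp: integrable_on_def)
    then show ?thesis by (rule continuous_on_eq) (use h2 in \<open>auto intro: integral_unique\<close>)
  qed
  have c3: "continuous_on {0..T} x3"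
  proof -
    have "continuous_on {0..T} (\<lambda>t. integral {0..t} v)"
      using h3[of T] T by (intro indefinite_integral_continuous_1) (auto simp: integrable_on_def)
    then show ?thesis by (rule continuous_on_eq) (use h3 in \<open>auto intro: integral_unique\<close>)
  qed
  have d1: "(x1 has_real_derivative x2 t) (at t within {0..T})" if "t \<in> {0..T}" for t
    unfolding has_real_derivative_iff_has_vector_derivative
    by (rule has_vector_derivative_transform[OF that _ integral_has_vector_derivative[OF c2 that]])
       (use h1 in \<open>auto intro: integral_unique[symmetric]\<close>)
  have d2: "(x2 has_real_derivative (x3 t - x1 t)) (at t within {0..T})" if "t \<in> {0..T}" for t
    unfolding has_real_derivative_iff_has_vector_derivative
    by (rule has_vector_derivative_transform[OF that _ integral_has_vector_derivative[OF continuous_on_diff[OF c3 c1] that, simplified]])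
       (use h2 in \<open>auto intro: integral_unique[symmetric]\<close>)
  have x10: "x1 0 = 0" "x2 0 = 0" "x3 0 = 0" using x0 by (auto simp: x1_def x2_def x3_def)
  have x1T: "x1 T = \<gamma>" "x2 T = 0" "x3 T = \<gamma>" using xT by (auto simp: x1_def x2_def x3_def)
  have W: "((\<lambda>t. x3 t * cos t) has_integral (\<gamma> * sin T)) {0..T}"
  proof -
    have "((\<lambda>t. x3 t * cos t) has_integral ((\<lambda>t. x1 t * sin t + x2 t * cos t) T - (\<lambda>t. x1 t * sin t + x2 t * cos t) 0)) {0..T}"
    proof (rule fundamental_theorem_of_calculus[OF T])
      fix t assume t: "t \<in> {0..T}"
      have "((\<lambda>t. x1 t * sin t + x2 t * cos t) has_real_derivative
          (x2 t * sin t + x1 t * cos t + ((x3 t - x1 t) * cos t - x2 t * sin t))) (at t within {0..T})"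
        using d1[OF t] d2[OF t] by (auto intro!: derivative_eq_intros)
      then show "((\<lambda>t. x1 t * sin t + x2 t * cos t) has_vector_derivative x3 t * cos t) (at t within {0..T})"
        by (simp add: has_real_derivative_iff_has_vector_derivative algebra_simps)
    qed
    then show ?thesis using x10 x1T by simp
  qed
  have V: "((\<lambda>t. - (x3 t * sin t)) has_integral (\<gamma> * cos T)) {0..T}"
  proof -
    have "((\<lambda>t. - (x3 t * sin t)) has_integral ((\<lambda>t. x1 t * cos t - x2 t * sin t) T - (\<lambda>t. x1 t * cos t - x2 t * sin t) 0)) {0..T}"
    proof (rule fundamental_theorem_of_calculus[OF T])
      fix t assume t: "t \<in> {0..T}"
      have "((\<lambda>t. x1 t * cos t - x2 t * sin t) has_real_derivative
          (x2 t * cos t - x1 t * sin t - ((x3 t - x1 t) * sin t + x2 t * cos t))) (at t within {0..T})"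
        using d1[OF t] d2[OF t] by (auto intro!: derivative_eq_intros)
      then show "((\<lambda>t. x1 t * cos t - x2 t * sin t) has_vector_derivative - (x3 t * sin t)) (at t within {0..T})"
        by (simp add: has_real_derivative_iff_has_vector_derivative algebra_simps)
    qed
    then show ?thesis using x10 x1T by simp
  qed
  have X: "integral {0..r} v = x3 r" if "r \<in> {0..T}" for r using h3[OF that] by (rule integral_unique)
  show "integral {0..T} v = \<gamma>" using X[of T] T x1T by simp
  have "integral {0..T} (\<lambda>s. v s * cos s) = cos T * integral {0..T} v - integral {0..T} (\<lambda>r. - sin r * integral {0..r} v)"
    by (rule ibp[OF vm vb T]) (auto intro!: derivative_eq_intros continuous_intros)
  also have "integral {0..T} (\<lambda>r. - sin r * integral {0..r} v) = integral {0..T} (\<lambda>t. - (x3 t * sin t))"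
    by (rule integral_cong) (simp add: X)
  also have "\<dots> = \<gamma> * cos T" using V by (rule integral_unique)
  finally show "integral {0..T} (\<lambda>s. v s * cos s) = 0" using X[of T] T x1T by simp
  have "integral {0..T} (\<lambda>s. v s * sin s) = sin T * integral {0..T} v - integral {0..T} (\<lambda>r. cos r * integral {0..r} v)"
    by (rule ibp[OF vm vb T]) (auto intro!: derivative_eq_intros continuous_intros)
  also have "integral {0..T} (\<lambda>r. cos r * integral {0..r} v) = integral {0..T} (\<lambda>t. x3 t * cos t)"
    by (rule integral_cong) (simp add: X)
  also have "\<dots> = \<gamma> * sin T" using W by (rule integral_unique)
  finally show "integral {0..T} (\<lambda>s. v s * sin s) = 0" using X[of T] T x1T by simp
qed

lemma has_integral_vector3:
  fixes f1 f2 f3 :: "real \<Rightarrow> real"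
  assumes "(f1 has_integral a) S" "(f2 has_integral b) S" "(f3 has_integral c) S"
  shows "((\<lambda>s. vector [f1 s, f2 s, f3 s] :: real^3) has_integral vector [a, b, c]) S"
proof -
  have e: "vector [p, q, r] = p *\<^sub>R axis 1 1 + q *\<^sub>R axis 2 1 + r *\<^sub>R (axis 3 1 :: real^3)" for p q r :: real
    by (simp add: vec_eq_iff forall_3 axis_def)
  show ?thesis unfolding e
    by (intro has_integral_add has_integral_scaleR_left assms)
qed

lemma construct:
  assumes vm: "v \<in> borel_measurable lebesgue" and vb: "\<And>s. \<bar>v s\<bar> \<le> 1" and T: "0 \<le> T"
    and m0: "integral {0..T} v = \<gamma>" and mc: "integral {0..T} (\<lambda>s. v s * cos s) = 0"
    and ms: "integral {0..T} (\<lambda>s. v s * sin s) = 0"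
  shows "steers v T (vector [0,0,0]) (vector [\<gamma>,0,\<gamma>])"
proof -
  define X3 where "X3 = (\<lambda>t. integral {0..t} v)"
  define C where "C = (\<lambda>t. integral {0..t} (\<lambda>s. cos s * X3 s))"
  define S where "S = (\<lambda>t. integral {0..t} (\<lambda>s. sin s * X3 s))"
  define x1 where "x1 = (\<lambda>t. sin t * C t - cos t * S t)"
  define x2 where "x2 = (\<lambda>t. cos t * C t + sin t * S t)"
  define x where "x = (\<lambda>t. vector [x1 t, x2 t, X3 t] :: real^3)"
  have vi: "v integrable_on {a..b}" for a b using vint_HK(1)[OF vm vb, of "\<lambda>_. 1"] by simp
  have c3: "continuous_on {0..T} X3"
    unfolding X3_def by (rule indefinite_integral_continuous_1) (rule vi)
  have cc: "continuous_on {0..T} (\<lambda>s. cos s * X3 s)" "continuous_on {0..T} (\<lambda>s. sin s * X3 s)"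
    by (intro continuous_intros c3)+
  have dC: "(C has_real_derivative cos t * X3 t) (at t within {0..T})" if "t \<in> {0..T}" for t
    unfolding has_real_derivative_iff_has_vector_derivative C_def
    using integral_has_vector_derivative[OF cc(1) that] .
  have dS: "(S has_real_derivative sin t * X3 t) (at t within {0..T})" if "t \<in> {0..T}" for t
    unfolding has_real_derivative_iff_has_vector_derivative S_def
    using integral_has_vector_derivative[OF cc(2) that] .
  have d1: "(x1 has_real_derivative x2 t) (at t within {0..T})" if t: "t \<in> {0..T}" for t
  proof -
    have "(x1 has_real_derivative (cos t * C t + sin t * (cos t * X3 t) - (- sin t * S t + cos t * (sin t * X3 t)))) (at t within {0..T})"
      unfolding x1_def using dC[OF t] dS[OF t] by (auto intro!: derivative_eq_intros)
    then show ?thesis by (simp add: x2_def algebra_simps)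
  qed
  have d2: "(x2 has_real_derivative X3 t - x1 t) (at t within {0..T})" if t: "t \<in> {0..T}" for t
  proof -
    have "(x2 has_real_derivative (- sin t * C t + cos t * (cos t * X3 t) + (cos t * S t + sin t * (sin t * X3 t)))) (at t within {0..T})"
      unfolding x2_def using dC[OF t] dS[OF t] by (auto intro!: derivative_eq_intros)
    moreover have "- sin t * C t + cos t * (cos t * X3 t) + (cos t * S t + sin t * (sin t * X3 t)) = X3 t - x1 t"
    proof -
      have "(sin t)^2 + (cos t)^2 = 1" by simp
      then have "cos t * (cos t * X3 t) + sin t * (sin t * X3 t) = X3 t"
        by algebra
      then show ?thesis by (simp add: x1_def algebra_simps)
    qed
    ultimately show ?thesis by simp
  qed
  have C0: "C 0 = 0" "S 0 = 0" "X3 0 = 0" by (simp_all add: C_def S_def X3_def)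
  have ST: "S T = - \<gamma> * cos T"
  proof -
    have "integral {0..T} (\<lambda>s. v s * cos s) = cos T * integral {0..T} v - integral {0..T} (\<lambda>r. - sin r * integral {0..r} v)"
      by (rule ibp[OF vm vb T]) (auto intro!: derivative_eq_intros continuous_intros)
    also have "integral {0..T} (\<lambda>r. - sin r * integral {0..r} v) = - S T"
      unfolding S_def X3_def by (simp add: integral_neg)
    finally have "0 = cos T * \<gamma> + S T" using mc m0 by simp
    then show ?thesis using mult.commute[of "cos T" \<gamma>] by linarith
  qed
  have CT: "C T = \<gamma> * sin T"
  proof -
    have "integral {0..T} (\<lambda>s. v s * sin s) = sin T * integral {0..T} v - integral {0..T} (\<lambda>r. cos r * integral {0..r} v)"
      by (rule ibp[OF vm vb T]) (auto intro!: derivative_eq_intros continuous_intros)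
    also have "integral {0..T} (\<lambda>r. cos r * integral {0..r} v) = C T"
      unfolding C_def X3_def by simp
    finally have "0 = sin T * \<gamma> - C T" using ms m0 by simp
    then show ?thesis using mult.commute[of "sin T" \<gamma>] by linarith
  qed
  have xT: "x T = vector [\<gamma>, 0, \<gamma>]"
  proof -
    have "(sin T)^2 + (cos T)^2 = 1" by simp
    then have "x1 T = \<gamma>" unfolding x1_def CT ST by algebra
    moreover have "x2 T = 0" unfolding x2_def CT ST by (simp add: algebra_simps)
    moreover have "X3 T = \<gamma>" using m0 by (simp add: X3_def)
    ultimately show ?thesis by (simp add: x_def)
  qed
  have x0: "x 0 = vector [0,0,0]" by (simp add: x_def x1_def x2_def C0)
  show ?thesis unfolding steers_def
  proof (intro conjI exI[of _ x] ballI T x0 xT)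
    fix t assume t: "t \<in> {0..T}"
    have sub: "{0..t} \<subseteq> {0..T}" using t by auto
    have eqf: "Amat *v x s + v s *\<^sub>R bvec = vector [x2 s, X3 s - x1 s, v s]" for s
      by (simp add: vec_eq_iff forall_3 Amat_comp2 x_def)
    have i1: "(x2 has_integral (x1 t - x1 0)) {0..t}"
      using t by (intro fundamental_theorem_of_calculus)
        (auto simp: has_real_derivative_iff_has_vector_derivative[symmetric]
              intro!: DERIV_subset[OF d1] )
    have i2: "((\<lambda>s. X3 s - x1 s) has_integral (x2 t - x2 0)) {0..t}"
      using t by (intro fundamental_theorem_of_calculus)
        (auto simp: has_real_derivative_iff_has_vector_derivative[symmetric]
              intro!: DERIV_subset[OF d2] )
    have i3: "(v has_integral X3 t) {0..t}"
      unfolding X3_def using vi by (rule integrable_integral)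
    have x10: "x1 0 = 0" "x2 0 = 0" by (simp_all add: x1_def x2_def C0)
    have "x t - vector [0,0,0] = vector [x1 t, x2 t, X3 t]"
      by (simp add: vec_eq_iff forall_3 x_def)
    then show "((\<lambda>s. Amat *v x s + v s *\<^sub>R bvec) has_integral (x t - vector [0, 0, 0])) {0..t}"
      unfolding eqf using has_integral_vector3[OF i1 i2 i3] x10 by simp
  qed
qed

lemma inv_aux: "(D::real) \<noteq> 0 \<Longrightarrow> Q \<noteq> 0 \<Longrightarrow> inverse (Q / D) * (x / D) = x / Q"
  by (simp add: field_simps)

lemma deriv_pos_aux:
  fixes a cc s :: real
  assumes a: "a \<ge> 2" and s2: "s * s + cc*cc = 1" and cc: "cc < 1"
  shows "2 / (a - 1) - 2 * (inverse (1 + (s / (a - cc))\<^sup>2) * ((cc * (a - cc) - s * s) / ((a - cc) * (a - cc)))) > 0"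
proof -
  have ac: "a - cc > 0" using a cc by linarith
  define Q where "Q = a*a - 2*a*cc + 1"
  have Qe: "Q = (a - cc)*(a - cc) + s * s" unfolding Q_def using s2 by algebra
  have Qp: "Q > 0" unfolding Qe using ac by (simp add: add_pos_nonneg)
  have num: "cc * (a - cc) - s * s = a*cc - 1" using s2 by algebra
  have ne: "(a - cc) * (a - cc) \<noteq> 0" using ac by simp
  have e1: "1 + (s / (a - cc))\<^sup>2 = Q / ((a - cc) * (a - cc))"
    unfolding Qe add_divide_distrib using ne by (simp add: power2_eq_square times_divide_times_eq)
  have e2: "inverse (1 + (s / (a - cc))\<^sup>2) * ((cc * (a - cc) - s * s) / ((a - cc) * (a - cc))) = (a*cc - 1) / Q"
    unfolding e1 num using inv_aux[OF ne, of Q "a*cc - 1"] Qp by simp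
  have key: "(a*cc - 1)*(a-1) < Q"
  proof -
    have "(a*cc - 1)*(a-1) = Q - (a*a + a)*(1 - cc)" unfolding Q_def by algebra
    moreover have "a*a + a > 0" using a by (simp add: add_pos_pos)
    moreover have "(a*a + a)*(1 - cc) > 0" using a cc calculation(2) by (intro mult_pos_pos) auto
    ultimately show ?thesis by linarith
  qed
  have "(a*cc - 1) / Q < 1 / (a - 1)"
    using key Qp a by (simp add: divide_simps mult.commute)
  moreover have "2 / (a - 1) = 2 * (1 / (a - 1))" by simp
  ultimately show ?thesis unfolding e2 by linarith
qed

lemma tau_exists_unique:
  fixes \<gamma> :: real and \<rho> :: nat
  assumes r: "\<rho> \<ge> 1" and g1: "2*(real \<rho> - 1)*pi < \<gamma>" and g2: "\<gamma> < 2*real \<rho>*pi"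
  shows "\<exists>!\<tau>. 0 < \<tau> \<and> \<tau> < pi \<and>
          (2*\<tau> + 2*(real \<rho> - 1)*pi - \<gamma>) / (2*real \<rho> - 1) = 2 * arctan (sin \<tau> / (2*real \<rho> - cos \<tau>))"
proof -
  define a where "a = 2 * real \<rho>"
  have a2: "a \<ge> 2" using r by (simp add: a_def)
  have d: "2 * real \<rho> - 1 = a - 1" by (simp add: a_def)
  define f where "f = (\<lambda>\<tau>. (2*\<tau> + 2*(real \<rho> - 1)*pi - \<gamma>) / (a - 1) - 2 * arctan (sin \<tau> / (a - cos \<tau>)))"
  have den: "a - cos x > 0" for x using a2 cos_le_one[of x] by linarith
  have eqv: "((2*\<tau> + 2*(real \<rho> - 1)*pi - \<gamma>) / (2*real \<rho> - 1) = 2 * arctan (sin \<tau> / (2*real \<rho> - cos \<tau>))) \<longleftrightarrow> f \<tau> = 0" for \<tau>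
    unfolding f_def d by (simp add: a_def)
  have deriv: "DERIV f x :> 2 / (a - 1) - 2 * (inverse (1 + (sin x / (a - cos x))\<^sup>2) * ((cos x * (a - cos x) - sin x * sin x) / ((a - cos x) * (a - cos x))))" for x
  proof -
    have a1: "a - 1 \<noteq> 0" using a2 by simp
    have dl: "DERIV (\<lambda>\<tau>. (2*\<tau> + 2*(real \<rho> - 1)*pi - \<gamma>) / (a - 1)) x :> 2 / (a - 1)"
    proof -
      have "DERIV (\<lambda>\<tau>. 2*\<tau> + 2*(real \<rho> - 1)*pi - \<gamma>) x :> 2"
        by (auto intro!: derivative_eq_intros)
      then show ?thesis by (rule DERIV_cdivide)
    qed
    have dg: "DERIV (\<lambda>x. a - cos x) x :> sin x"
      by (auto intro!: derivative_eq_intros)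
    have dq: "DERIV (\<lambda>x. sin x / (a - cos x)) x :> (cos x * (a - cos x) - sin x * sin x) / ((a - cos x) * (a - cos x))"
      using DERIV_divide[OF DERIV_sin dg] den[of x] by simp
    have da: "DERIV (\<lambda>x. arctan (sin x / (a - cos x))) x :> inverse (1 + (sin x / (a - cos x))\<^sup>2) * ((cos x * (a - cos x) - sin x * sin x) / ((a - cos x) * (a - cos x)))"
      by (rule DERIV_chain2[OF DERIV_arctan dq])
    show ?thesis unfolding f_def
      by (intro DERIV_diff dl DERIV_cmult da)
  qed
  have dpos: "0 < x \<Longrightarrow> x < pi \<Longrightarrow> 2 / (a - 1) - 2 * (inverse (1 + (sin x / (a - cos x))\<^sup>2) * ((cos x * (a - cos x) - sin x * sin x) / ((a - cos x) * (a - cos x)))) > 0" for x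
  proof (rule deriv_pos_aux[OF a2])
    show "sin x * sin x + cos x * cos x = 1" using sin_cos_squared_add[of x] by (simp add: power2_eq_square)
    assume "0 < x" "x < pi"
    then have "cos x < cos 0" by (intro cos_monotone_0_pi) auto
    then show "cos x < 1" by simp
  qed
  have fcont: "continuous_on {0..pi} f"
    unfolding f_def using den a2 by (intro continuous_intros) (auto simp: less_imp_neq[symmetric])
  have f0: "f 0 < 0" unfolding f_def using g1 a2 by (simp add: divide_neg_pos)
  have fpi: "f pi > 0" unfolding f_def using g2 a2 by (simp add: a_def algebra_simps)
  obtain t where t: "0 \<le> t" "t \<le> pi" "f t = 0"
    using IVT'[of f 0 0 pi] f0 fpi fcont by auto
  have t0: "0 < t" "t < pi" using t f0 fpi by (auto simp: order.order_iff_strict)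
  have uniq: "s = t" if s: "0 < s" "s < pi" "f s = 0" for s
  proof (rule ccontr)
    assume "s \<noteq> t"
    then consider "s < t" | "t < s" by linarith
    then show False
    proof cases
      case 1
      have "f s < f t"
        by (rule DERIV_pos_imp_increasing[OF 1]) (use s t0 deriv dpos in \<open>force\<close>)
      then show False using s t by simp
    next
      case 2
      have "f t < f s"
        by (rule DERIV_pos_imp_increasing[OF 2]) (use s t0 deriv dpos in \<open>force\<close>)
      then show False using s t by simp
    qed
  qed
  show ?thesis unfolding eqv using t0 t uniq by blast
qed

lemma cos_per: "cos (x + 2*real k*pi) = cos x"
  by (simp add: cos_add)
lemma sin_per: "sin (x + 2*real k*pi) = sin x"
  by (simp add: sin_add)

lemma cos_lt_h:
  assumes "0 < h" "h < pi" "h < x" "x < 2*pi - h"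
  shows "cos x < cos h"
proof (cases "x \<le> pi")
  case True then show ?thesis using assms by (intro cos_monotone_0_pi) auto
next
  case False
  have "cos (2*pi - x) < cos h" using assms False by (intro cos_monotone_0_pi) auto
  then show ?thesis by simp
qed

lemma alg1: fixes R b t g :: real assumes "g = 2*t + 2*(R - 1)*pi - (2*R - 1)*b"
  shows "(2*t + b + 2*(R - 1)*pi) * (2*R - 1) = 4*R*(t + (R - 1)*pi) - g"
  unfolding assms by algebra

lemma alg2: fixes R b t g :: real assumes "g = 2*t + 2*(R - 1)*pi - (2*R - 1)*b"
  shows "(2*pi - b) * (2*R - 1) = 2*R*pi - 2*t + g"
  unfolding assms by algebra

locale sol =
  fixes \<rho> :: nat and \<gamma> \<tau> :: real
  assumes r: "\<rho> \<ge> 1" and g1: "2*(real \<rho> - 1)*pi < \<gamma>" and g2: "\<gamma> < 2*real \<rho>*pi"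
    and t0: "0 < \<tau>" and tpi: "\<tau> < pi"
    and E: "(2*\<tau> + 2*(real \<rho> - 1)*pi - \<gamma>) / (2*real \<rho> - 1) = 2 * arctan (sin \<tau> / (2*real \<rho> - cos \<tau>))"
begin

definition "bet = (2*\<tau> + 2*(real \<rho> - 1)*pi - \<gamma>) / (2*real \<rho> - 1)"
definition "hh = bet / 2"
definition "phi s = cos hh - cos (s - (\<tau> + hh))"
definition "Iv k = {\<tau> + 2*real k*pi .. \<tau> + bet + 2*real k*pi}"
definition "Uc s = 1 - 2 * (\<Sum>k<\<rho>. indicator (Iv k) s :: real)"
definition "Ts = 2*\<tau> + bet + 2*(real \<rho> - 1)*pi"

lemma d1: "2*real \<rho> - 1 \<ge> 1" using r by simp

definition "qq = sin \<tau> / (2*real \<rho> - cos \<tau>)"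

lemma qq_pos: "qq > 0"
proof -
  have "sin \<tau> > 0" using t0 tpi by (rule sin_gt_zero)
  moreover have "2*real \<rho> - cos \<tau> > 0" using r cos_le_one[of \<tau>] by linarith
  ultimately show ?thesis by (simp add: qq_def)
qed

lemma hh_arctan: "hh = arctan qq"
  using E by (simp add: hh_def bet_def qq_def)

lemma hh_bounds: "0 < hh" "hh < pi/2"
  using qq_pos arctan_ubound[of qq] by (auto simp: hh_arctan)

lemma bet_bounds: "0 < bet" "bet < pi"
  using hh_bounds by (auto simp: hh_def)

lemma tb: "\<tau> + bet < 2*pi" using bet_bounds tpi by linarith

lemma key: "sin (\<tau> + hh) = 2*real \<rho> * sin hh"
proof -
  have "0 < 1 + qq^2" by (simp add: add_pos_nonneg)
  then have cp: "cos hh > 0" unfolding hh_arctan cos_arctan by simp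
  have "tan hh = qq" unfolding hh_arctan by (rule tan_arctan)
  then have "sin hh = qq * cos hh" using cp by (simp add: tan_def field_simps)
  moreover have "2*real \<rho> - cos \<tau> > 0" using r cos_le_one[of \<tau>] by linarith
  ultimately have "sin hh * (2*real \<rho> - cos \<tau>) = sin \<tau> * cos hh"
    by (simp add: qq_def field_simps)
  then show ?thesis by (simp add: sin_add algebra_simps)
qed

lemma gam: "\<gamma> = 2*\<tau> + 2*(real \<rho> - 1)*pi - (2*real \<rho> - 1)*bet"
proof -
  have "bet * (2*real \<rho> - 1) = 2*\<tau> + 2*(real \<rho> - 1)*pi - \<gamma>"
    using d1 by (simp add: bet_def)
  then show ?thesis using mult.commute[of bet "2*real \<rho> - 1"] by linarith
qed

lemma Ts_eq: "Ts = (4*real \<rho>*(\<tau> + (real \<rho> - 1)*pi) - \<gamma>)/(2*real \<rho> - 1)"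
proof -
  have "Ts * (2*real \<rho> - 1) = 4*real \<rho>*(\<tau> + (real \<rho> - 1)*pi) - \<gamma>"
    unfolding Ts_def using alg1[OF gam] .
  then show ?thesis using d1 by (simp add: eq_divide_eq)
qed

lemma odd_len: "(2*real \<rho>*pi - 2*\<tau> + \<gamma>)/(2*real \<rho> - 1) = 2*pi - bet"
proof -
  have "(2*pi - bet) * (2*real \<rho> - 1) = 2*real \<rho>*pi - 2*\<tau> + \<gamma>"
    using alg2[OF gam] .
  then show ?thesis using d1 by (simp add: divide_eq_eq)
qed

lemma sw_len_simp: "sw_len \<rho> \<gamma> \<tau> j = (if j = 1 \<or> j = 2*\<rho>+1 then \<tau> else if even j then bet else 2*pi - bet)"
  unfolding sw_len_def bet_def[symmetric] odd_len by simp

lemma sw_time_eq: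
  "j \<le> 2*\<rho> \<Longrightarrow> sw_time \<rho> \<gamma> \<tau> j = (if j = 0 then 0 else if even j then \<tau> + bet + (real j - 2)*pi else \<tau> + (real j - 1)*pi)"
proof (induction j)
  case 0 then show ?case by (simp add: sw_time_def)
next
  case (Suc j)
  have st: "sw_time \<rho> \<gamma> \<tau> (Suc j) = sw_time \<rho> \<gamma> \<tau> j + sw_len \<rho> \<gamma> \<tau> (Suc j)"
    by (simp add: sw_time_def atLeastAtMostSuc_conv)
  have IH: "sw_time \<rho> \<gamma> \<tau> j = (if j = 0 then 0 else if even j then \<tau> + bet + (real j - 2)*pi else \<tau> + (real j - 1)*pi)"
    using Suc by simp
  show ?case
  proof (cases "j = 0")
    case True then show ?thesis using st IH by (simp add: sw_len_simp)
  next
    case False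
    have ne: "Suc j \<noteq> 1" "Suc j \<noteq> 2*\<rho>+1" using False Suc.prems by auto
    show ?thesis
    proof (cases "even j")
      case True
      then have "odd (Suc j)" by simp
      then show ?thesis using st IH False True ne by (simp add: sw_len_simp algebra_simps)
    next
      case F2: False
      then have "even (Suc j)" by simp
      then show ?thesis using st IH False F2 ne by (simp add: sw_len_simp algebra_simps)
    qed
  qed
qed

lemma sw_time_last: "sw_time \<rho> \<gamma> \<tau> (2*\<rho>+1) = Ts"
proof -
  have "sw_time \<rho> \<gamma> \<tau> (2*\<rho>+1) = sw_time \<rho> \<gamma> \<tau> (2*\<rho>) + sw_len \<rho> \<gamma> \<tau> (2*\<rho>+1)"
    by (simp add: sw_time_def atLeastAtMostSuc_conv)
  also have "\<dots> = \<tau> + bet + (2*real \<rho> - 2)*pi + \<tau>"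
    using r by (simp add: sw_time_eq sw_len_simp)
  finally show ?thesis by (simp add: Ts_def algebra_simps)
qed

end

lemma alg3: fixes R b t g :: real assumes "g = 2*t + 2*(R - 1)*pi - (2*R - 1)*b"
  shows "(2*t + b + 2*(R - 1)*pi) - 2*(R*b) = g"
  unfolding assms by algebra

lemma trig1: fixes A h R :: real assumes "sin A = 2*R* sin h"
  shows "sin (2*A) - 2*R*(sin (A+h) - sin (A-h)) = 0"
proof -
  have "sin (A+h) - sin (A-h) = 2 * cos A * sin h" by (simp add: sin_add sin_diff)
  moreover have "sin (2*A) = 2 * sin A * cos A" by (rule sin_double)
  ultimately show ?thesis using assms by algebra
qed

lemma trig2: fixes A h R :: real assumes "sin A = 2*R* sin h"
  shows "(1 - cos (2*A)) - 2*R*(cos (A-h) - cos (A+h)) = 0"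
proof -
  have "cos (A-h) - cos (A+h) = 2 * sin A * sin h" by (simp add: cos_add cos_diff)
  moreover have "1 - cos (2*A) = 2 * (sin A)^2"
    using cos_double[of A] sin_cos_squared_add[of A] by linarith
  ultimately show ?thesis using assms by algebra
qed

lemma hasint:
  fixes G g :: "real \<Rightarrow> real"
  assumes "a \<le> b" "\<And>x. (G has_real_derivative g x) (at x)"
  shows "integral {a..b} g = G b - G a"
  by (intro integral_unique fundamental_theorem_of_calculus assms)
     (auto simp: has_real_derivative_iff_has_vector_derivative[symmetric] intro: DERIV_subset[OF assms(2)])

context sol begin

lemma Iv_mem: "s \<in> Iv k \<longleftrightarrow> \<tau> + 2*real k*pi \<le> s \<and> s \<le> \<tau> + bet + 2*real k*pi"
  by (simp add: Iv_def)

lemma bet_hh: "bet = 2*hh" by (simp add: hh_def)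

lemma phi_in: assumes "s \<in> Iv k" shows "phi s \<le> 0"
proof -
  define x where "x = s - (\<tau> + hh) - 2*real k*pi"
  have xa: "\<bar>x\<bar> \<le> hh" using assms unfolding Iv_mem x_def bet_hh by auto
  have "cos (s - (\<tau> + hh)) = cos x" using cos_per[of x k] by (simp add: x_def)
  also have "cos x = cos \<bar>x\<bar>" by simp
  also have "cos \<bar>x\<bar> \<ge> cos hh" using xa hh_bounds by (intro cos_monotone_0_pi_le) auto
  finally show ?thesis by (simp add: phi_def)
qed

lemma phi_in_strict: assumes "\<tau> + 2*real k*pi < s" "s < \<tau> + bet + 2*real k*pi" shows "phi s < 0"
proof -
  define x where "x = s - (\<tau> + hh) - 2*real k*pi"
  have xa: "\<bar>x\<bar> < hh" using assms unfolding x_def bet_hh by auto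
  have "cos (s - (\<tau> + hh)) = cos x" using cos_per[of x k] by (simp add: x_def)
  also have "cos x = cos \<bar>x\<bar>" by simp
  also have "cos \<bar>x\<bar> > cos hh" using xa hh_bounds by (intro cos_monotone_0_pi) auto
  finally show ?thesis by (simp add: phi_def)
qed

lemma Ts_lt: "Ts < \<tau> + 2*real \<rho>*pi"
  using tb by (simp add: Ts_def algebra_simps)

lemma phi_out: assumes s0: "0 \<le> s" and sT: "s \<le> Ts" and nin: "\<forall>k<\<rho>. s \<notin> Iv k" shows "phi s > 0"
proof (cases "s < \<tau>")
  case True
  define x where "x = (\<tau> + hh) - s"
  have "hh < x" "x < 2*pi - hh" using True s0 tb unfolding x_def bet_hh by auto
  then have "cos x < cos hh" using hh_bounds by (intro cos_lt_h) auto
  moreover have "cos (s - (\<tau> + hh)) = cos x"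
    by (metis cos_minus minus_diff_eq x_def)
  ultimately show ?thesis by (simp add: phi_def)
next
  case False
  define y where "y = (s - \<tau>) / (2*pi)"
  have y0: "y \<ge> 0" using False by (simp add: y_def)
  define k where "k = nat \<lfloor>y\<rfloor>"
  have rk: "real k = of_int \<lfloor>y\<rfloor>" using y0 by (simp add: k_def)
  have k1: "real k \<le> y" "y < real k + 1" unfolding rk by linarith+
  have k1': "real k * (2*pi) \<le> s - \<tau>" using k1(1) by (simp add: y_def pos_le_divide_eq)
  have k2': "s - \<tau> < (real k + 1) * (2*pi)" using k1(2) by (simp add: y_def pos_divide_less_eq)
  have kr: "k < \<rho>"
  proof (rule ccontr)
    assume "\<not> k < \<rho>"
    then have "real \<rho> \<le> real k" by simp
    then have "real \<rho> * (2*pi) \<le> real k * (2*pi)" by (intro mult_right_mono) auto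
    then show False using k1' sT Ts_lt by linarith
  qed
  have "s \<notin> Iv k" using nin kr by auto
  then have sg: "s > \<tau> + bet + 2*real k*pi" using k1' unfolding Iv_mem by (auto simp: algebra_simps)
  define x where "x = s - (\<tau> + hh) - 2*real k*pi"
  have "hh < x" "x < 2*pi - hh" using sg k2' unfolding x_def bet_hh by (auto simp: algebra_simps)
  then have "cos x < cos hh" using hh_bounds by (intro cos_lt_h) auto
  moreover have "cos (s - (\<tau> + hh)) = cos x" using cos_per[of x k] by (simp add: x_def)
  ultimately show ?thesis by (simp add: phi_def)
qed

lemma disj: assumes "s \<in> Iv k" "s \<in> Iv k'" shows "k = k'"
proof -
  have lt: "real k < real k' + 1" if "s \<in> Iv k" "s \<in> Iv k'" for k k'
  proof -
    have "(real k - real k') * (2*pi) \<le> bet" using that unfolding Iv_mem by (auto simp: algebra_simps)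
    also have "bet < 1 * (2*pi)" using bet_bounds by simp
    finally have "(real k - real k') * (2*pi) < 1 * (2*pi)" .
    then have "real k - real k' < 1" by (rule mult_right_less_imp_less) simp
    then show ?thesis by simp
  qed
  have "real k < real k' + 1" "real k' < real k + 1" using lt assms by auto
  then show ?thesis by linarith
qed

lemma U_val: "Uc s = (if \<exists>k<\<rho>. s \<in> Iv k then -1 else 1)"
proof (cases "\<exists>k<\<rho>. s \<in> Iv k")
  case True
  then obtain k0 where k0: "k0 < \<rho>" "s \<in> Iv k0" by auto
  have "(\<Sum>k<\<rho>. indicator (Iv k) s :: real) = (\<Sum>k<\<rho>. if k = k0 then 1 else 0)"
    by (rule sum.cong) (auto simp: indicator_def k0(2) dest: disj[OF k0(2)])
  also have "\<dots> = 1" using k0 by simp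
  finally show ?thesis using True by (simp add: Uc_def)
next
  case False
  then have "(\<Sum>k<\<rho>. indicator (Iv k) s :: real) = 0"
    by (intro sum.neutral) (auto simp: indicator_def)
  then show ?thesis using False by (simp add: Uc_def)
qed

lemma U_bound: "\<bar>Uc s\<bar> \<le> 1" by (simp add: U_val)

lemma U_meas: "Uc \<in> borel_measurable lebesgue"
proof -
  have "Uc \<in> borel_measurable lborel" unfolding Uc_def[abs_def] Iv_def by measurable
  then show ?thesis by (rule measurable_completion)
qed

lemma U_phi: assumes "s \<in> {0..Ts}" shows "Uc s * phi s = \<bar>phi s\<bar>"
proof (cases "\<exists>k<\<rho>. s \<in> Iv k")
  case True
  then obtain k where "s \<in> Iv k" by auto
  then have "phi s \<le> 0" by (rule phi_in)
  then show ?thesis using True by (simp add: U_val)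
next
  case False
  then have "phi s > 0" using assms by (intro phi_out) auto
  then show ?thesis using False by (simp add: U_val)
qed

lemma Iv_sub: assumes "k < \<rho>" shows "Iv k \<subseteq> {0..Ts}"
proof -
  have "real k \<le> real \<rho> - 1" using assms by linarith
  then have "0 \<le> (2*(real \<rho> - 1 - real k))*pi" by (intro mult_nonneg_nonneg) auto
  moreover have "Ts - (\<tau> + bet + 2*real k*pi) = \<tau> + (2*(real \<rho> - 1 - real k))*pi"
    by (simp add: Ts_def algebra_simps)
  moreover have "0 \<le> 2*real k*pi" by simp
  ultimately show ?thesis unfolding Iv_def using t0 bet_bounds by auto
qed

lemma U_int:
  assumes gc: "continuous_on UNIV g"
  shows "integral {0..Ts} (\<lambda>s. Uc s * g s) = integral {0..Ts} g - 2 * (\<Sum>k<\<rho>. integral (Iv k) g)"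
proof -
  have eq: "Uc s * g s = g s - 2 * (\<Sum>k<\<rho>. (if s \<in> Iv k then g s else 0))" for s
  proof -
    have "(\<Sum>k<\<rho>. indicator (Iv k) s :: real) * g s = (\<Sum>k<\<rho>. indicator (Iv k) s * g s)"
      by (rule sum_distrib_right)
    also have "\<dots> = (\<Sum>k<\<rho>. (if s \<in> Iv k then g s else 0))"
      by (rule sum.cong) (auto simp: indicator_def)
    finally have "(\<Sum>k<\<rho>. indicator (Iv k) s :: real) * g s = (\<Sum>k<\<rho>. (if s \<in> Iv k then g s else 0))" .
    then show ?thesis by (simp add: Uc_def algebra_simps)
  qed
  have gi: "g integrable_on {a..b}" for a b
    by (rule integrable_continuous_interval) (rule continuous_on_subset[OF gc], simp)
  have ik: "(\<lambda>s. if s \<in> Iv k then g s else 0) integrable_on {0..Ts}" if "k < \<rho>" for k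
    unfolding integrable_restrict_Int using Iv_sub[OF that] gi
    by (simp add: Int_absorb2 Iv_def)
  have isum: "(\<lambda>s. \<Sum>k<\<rho>. (if s \<in> Iv k then g s else 0)) integrable_on {0..Ts}"
    using ik by (intro integrable_sum) auto
  have "integral {0..Ts} (\<lambda>s. Uc s * g s) = integral {0..Ts} (\<lambda>s. g s - 2 * (\<Sum>k<\<rho>. (if s \<in> Iv k then g s else 0)))"
    by (simp add: eq)
  also have "\<dots> = integral {0..Ts} g - 2 * integral {0..Ts} (\<lambda>s. \<Sum>k<\<rho>. (if s \<in> Iv k then g s else 0))"
    using integral_diff[OF gi integrable_on_mult_right[OF isum, of 2]] by simp
  also have "integral {0..Ts} (\<lambda>s. \<Sum>k<\<rho>. (if s \<in> Iv k then g s else 0)) = (\<Sum>k<\<rho>. integral {0..Ts} (\<lambda>s. if s \<in> Iv k then g s else 0))"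
    using ik by (intro integral_sum) auto
  also have "\<dots> = (\<Sum>k<\<rho>. integral (Iv k) g)"
    by (rule sum.cong[OF refl]) (simp add: integral_restrict_Int Int_absorb2 Iv_sub)
  finally show ?thesis .
qed

lemma Ts_ge: "Ts \<ge> 0" using t0 bet_bounds r by (simp add: Ts_def)

lemma Ts_per: "Ts = (2*\<tau> + bet) + 2*real (\<rho> - 1)*pi"
  using r by (simp add: Ts_def of_nat_diff)

lemma Iv_le: "\<tau> + 2*real k*pi \<le> \<tau> + bet + 2*real k*pi" using bet_bounds by simp

lemma U_m0: "integral {0..Ts} Uc = \<gamma>"
proof -
  have d: "\<And>x. ((\<lambda>x. x) has_real_derivative 1) (at x)" by (auto intro!: derivative_eq_intros)
  have a1: "integral {0..Ts} (\<lambda>s. Uc s * 1) = integral {0..Ts} (\<lambda>s. 1) - 2 * (\<Sum>k<\<rho>. integral (Iv k) (\<lambda>s. 1))"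
    by (rule U_int) simp
  have a2: "integral {0..Ts} (\<lambda>s. 1::real) = Ts" using hasint[OF Ts_ge d] by simp
  have a3: "integral (Iv k) (\<lambda>s. 1::real) = bet" for k
    using hasint[OF Iv_le d, of k] by (simp add: Iv_def)
  have "integral {0..Ts} Uc = Ts - 2 * (real \<rho> * bet)" using a1 a2 a3 by simp
  also have "\<dots> = \<gamma>" unfolding Ts_def by (rule alg3[OF gam])
  finally show ?thesis .
qed

lemma U_mc: "integral {0..Ts} (\<lambda>s. Uc s * cos s) = 0"
proof -
  have d: "\<And>x. (sin has_real_derivative cos x) (at x)" by (auto intro!: derivative_eq_intros)
  have a1: "integral {0..Ts} (\<lambda>s. Uc s * cos s) = integral {0..Ts} cos - 2 * (\<Sum>k<\<rho>. integral (Iv k) cos)"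
    by (rule U_int) (intro continuous_intros)
  have a2: "integral {0..Ts} cos = sin Ts" using hasint[OF Ts_ge d] by simp
  have a3: "integral (Iv k) cos = sin (\<tau> + bet) - sin \<tau>" for k
    using hasint[OF Iv_le d, of k] by (simp add: Iv_def sin_per)
  have a4: "sin Ts = sin (2*(\<tau> + hh))" unfolding Ts_per sin_per by (simp add: bet_hh algebra_simps)
  have "integral {0..Ts} (\<lambda>s. Uc s * cos s) = sin (2*(\<tau> + hh)) - 2*real \<rho>*(sin ((\<tau> + hh) + hh) - sin ((\<tau> + hh) - hh))"
    using a1 a2 a3 a4 by (simp add: bet_hh algebra_simps)
  also have "\<dots> = 0" by (rule trig1[OF key])
  finally show ?thesis .
qed

lemma U_ms: "integral {0..Ts} (\<lambda>s. Uc s * sin s) = 0"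
proof -
  have d: "\<And>x. ((\<lambda>x. - cos x) has_real_derivative sin x) (at x)" by (auto intro!: derivative_eq_intros)
  have a1: "integral {0..Ts} (\<lambda>s. Uc s * sin s) = integral {0..Ts} sin - 2 * (\<Sum>k<\<rho>. integral (Iv k) sin)"
    by (rule U_int) (intro continuous_intros)
  have a2: "integral {0..Ts} sin = 1 - cos Ts" using hasint[OF Ts_ge d] by simp
  have a3: "integral (Iv k) sin = cos \<tau> - cos (\<tau> + bet)" for k
    using hasint[OF Iv_le d, of k] by (simp add: Iv_def cos_per)
  have a4: "cos Ts = cos (2*(\<tau> + hh))" unfolding Ts_per cos_per by (simp add: bet_hh algebra_simps)
  have "integral {0..Ts} (\<lambda>s. Uc s * sin s) = (1 - cos (2*(\<tau> + hh))) - 2*real \<rho>*(cos ((\<tau> + hh) - hh) - cos ((\<tau> + hh) + hh))"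
    using a1 a2 a3 a4 by (simp add: bet_hh algebra_simps)
  also have "\<dots> = 0" by (rule trig2[OF key])
  finally show ?thesis .
qed

end

lemma AEz:
  fixes f :: "real \<Rightarrow> real"
  assumes si: "set_integrable lebesgue {a..b} f" and nn: "\<And>s. s \<in> {a..b} \<Longrightarrow> 0 \<le> f s"
    and z: "integral {a..b} f = 0"
  shows "AE s in lborel. s \<in> {a..b} \<longrightarrow> f s = 0"
proof -
  have "(LINT s:{a..b}|lebesgue. f s) = 0" using set_lebesgue_integral_eq_integral(2)[OF si] z by simp
  then have i0: "integral\<^sup>L lebesgue (\<lambda>s. indicator {a..b} s *\<^sub>R f s) = 0" by (simp add: set_lebesgue_integral_def)
  have ii: "integrable lebesgue (\<lambda>s. indicator {a..b} s *\<^sub>R f s)" using si by (simp add: set_integrable_def)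
  have "AE s in lebesgue. 0 \<le> indicator {a..b} s *\<^sub>R f s" using nn by (intro AE_I2) (auto simp: indicator_def)
  then have "AE s in lebesgue. indicator {a..b} s *\<^sub>R f s = 0" using integral_nonneg_eq_0_iff_AE[OF ii] i0 by blast
  then have "AE s in lborel. indicator {a..b} s *\<^sub>R f s = 0" by (simp add: AE_completion_iff)
  then show ?thesis by eventually_elim (auto simp: indicator_def)
qed

context sol begin

lemma ste_even: "1 \<le> k \<Longrightarrow> k \<le> \<rho> \<Longrightarrow> sw_time \<rho> \<gamma> \<tau> (2*k) = \<tau> + bet + 2*(real k - 1)*pi"
  by (simp add: sw_time_eq algebra_simps)

lemma ste_odd: "k < \<rho> \<Longrightarrow> sw_time \<rho> \<gamma> \<tau> (2*k+1) = \<tau> + 2*real k*pi"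
  by (simp add: sw_time_eq algebra_simps)

lemma pmono: "real a \<le> real b \<Longrightarrow> 2*real a*pi \<le> 2*real b*pi"
  by simp

lemma piece:
  assumes j: "j \<in> {1..2*\<rho>+1}" and lo: "sw_time \<rho> \<gamma> \<tau> (j-1) < t" and hi: "t < sw_time \<rho> \<gamma> \<tau> j"
  shows "0 < t \<and> t < Ts \<and> Uc t = (-1)^(j-1) \<and> phi t \<noteq> 0"
proof (cases "even j")
  case True
  then obtain k where k: "j = 2*k" by (rule evenE)
  have k1: "1 \<le> k" "k \<le> \<rho>" using j k by auto
  have jm: "j - 1 = 2*(k-1) + 1" using k k1 by simp
  have lo': "\<tau> + 2*real (k-1)*pi < t" using lo unfolding jm using ste_odd[of "k-1"] k1 by simp
  have hi': "t < \<tau> + bet + 2*real (k-1)*pi" using hi ste_even[OF k1] k1 unfolding k by (simp add: of_nat_diff)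
  have neg: "phi t < 0" by (rule phi_in_strict[OF lo' hi'])
  have "t \<in> Iv (k-1)" using lo' hi' by (simp add: Iv_mem)
  moreover have "k - 1 < \<rho>" using k1 by simp
  ultimately have U: "Uc t = -1" by (auto simp: U_val)
  have "odd (j - 1)" using jm by simp
  then have pw: "(-1::real)^(j-1) = -1" by simp
  have "0 \<le> 2*real (k-1)*pi" by simp
  then have t0': "0 < t" using lo' t0 by linarith
  have "real (k-1) \<le> real \<rho> - 1" using k1 by (simp add: of_nat_diff)
  then have m: "2*real (k-1)*pi \<le> 2*(real \<rho> - 1)*pi" by (intro mult_right_mono mult_left_mono) auto
  have "t < Ts" unfolding Ts_def using hi' t0 m by linarith
  then show ?thesis using neg U pw t0' by simp
next
  case False
  then obtain k where k: "j = 2*k + 1" by (rule oddE)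
  have kr: "k \<le> \<rho>" using j k by auto
  have jm: "j - 1 = 2*k" using k by simp
  have L: "(if k = 0 then 0 else \<tau> + bet + 2*(real k - 1)*pi) < t"
    using lo unfolding jm using ste_even[of k] kr by (cases "k = 0") (auto simp: sw_time_def)
  have up: "t < \<tau> + 2*real k*pi \<and> t < Ts"
  proof (cases "k = \<rho>")
    case True
    then have "t < Ts" using hi k sw_time_last by simp
    then show ?thesis using Ts_lt True by simp
  next
    case False
    then have kl: "k < \<rho>" using kr by simp
    have "t < \<tau> + 2*real k*pi" using hi k ste_odd[OF kl] by simp
    moreover have "\<tau> + 2*real k*pi \<le> Ts" using Iv_sub[OF kl] Iv_le[of k] by (auto simp: Iv_def)
    ultimately show ?thesis by simp
  qed
  have L0: "0 \<le> (if k = 0 then 0 else \<tau> + bet + 2*(real k - 1)*pi)"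
  proof (cases "k = 0")
    case False
    then have "0 \<le> 2*(real k - 1)*pi" by simp
    then show ?thesis using t0 bet_bounds by simp
  qed simp
  have nin: "\<forall>k'<\<rho>. t \<notin> Iv k'"
  proof (intro allI impI)
    fix k' assume "k' < \<rho>"
    show "t \<notin> Iv k'"
    proof (cases "k' < k")
      case True
      then have "real k' \<le> real k - 1" by linarith
      then have m: "2*real k'*pi \<le> 2*(real k - 1)*pi" by (intro mult_right_mono mult_left_mono) auto
      have "k \<noteq> 0" using True by simp
      then have L': "\<tau> + bet + 2*(real k - 1)*pi < t" using L by simp
      show ?thesis unfolding Iv_mem using m L' by linarith
    next
      case False
      then have m: "2*real k*pi \<le> 2*real k'*pi" by (intro mult_right_mono mult_left_mono) auto
      show ?thesis unfolding Iv_mem using m up by linarith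
    qed
  qed
  have U: "Uc t = 1" using nin by (auto simp: U_val)
  have tpos: "0 < t" using L L0 by linarith
  have pos: "phi t > 0" using nin tpos up by (intro phi_out) auto
  have pw: "(-1::real)^(j-1) = 1" using jm by simp
  show ?thesis using U tpos up pos pw by simp
qed

lemma phi_cont: "continuous_on UNIV phi"
  unfolding phi_def[abs_def] by (intro continuous_intros)

lemma phi_dual:
  assumes adm: "admissible v" and st: "steers v T (vector [0,0,0]) (vector [\<gamma>,0,\<gamma>])"
  shows "integral {0..T} (\<lambda>s. v s * phi s) = cos hh * \<gamma>"
proof -
  have vm: "v \<in> borel_measurable lebesgue" and vb: "\<And>s. \<bar>v s\<bar> \<le> 1"
    using adm by (auto simp: admissible_def)
  note M = moments[OF adm st]
  have i0: "v integrable_on {0..T}" using vint_HK(1)[OF vm vb, of "\<lambda>_. 1"] by simp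
  have ic: "(\<lambda>s. v s * cos s) integrable_on {0..T}" using vint_HK(1)[OF vm vb, of cos] by (simp add: continuous_intros)
  have is': "(\<lambda>s. v s * sin s) integrable_on {0..T}" using vint_HK(1)[OF vm vb, of sin] by (simp add: continuous_intros)
  have e: "(\<lambda>s. v s * phi s) = (\<lambda>s. cos hh * v s - (cos (\<tau>+hh) * (v s * cos s) + sin (\<tau>+hh) * (v s * sin s)))"
    by (auto simp: phi_def cos_diff algebra_simps fun_eq_iff)
  have "integral {0..T} (\<lambda>s. v s * phi s) = cos hh * integral {0..T} v - (cos (\<tau>+hh) * integral {0..T} (\<lambda>s. v s * cos s) + sin (\<tau>+hh) * integral {0..T} (\<lambda>s. v s * sin s))"
  proof -
    have I1: "(\<lambda>s. cos hh * v s) integrable_on {0..T}" by (rule integrable_on_mult_right[OF i0])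
    have I2: "(\<lambda>s. cos (\<tau>+hh) * (v s * cos s)) integrable_on {0..T}" by (rule integrable_on_mult_right[OF ic])
    have I3: "(\<lambda>s. sin (\<tau>+hh) * (v s * sin s)) integrable_on {0..T}" by (rule integrable_on_mult_right[OF is'])
    show ?thesis unfolding e integral_diff[OF I1 integrable_add[OF I2 I3]] integral_add[OF I2 I3] by simp
  qed
  then show ?thesis using M by simp
qed

lemma U_adm: "admissible Uc" using U_meas U_bound by (simp add: admissible_def)

lemma U_steers: "steers Uc Ts (vector [0,0,0]) (vector [\<gamma>,0,\<gamma>])"
  by (rule construct[OF U_meas U_bound Ts_ge U_m0 U_mc U_ms])

lemma absphi_int: "integral {0..Ts} (\<lambda>s. \<bar>phi s\<bar>) = cos hh * \<gamma>"
proof -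
  have "integral {0..Ts} (\<lambda>s. \<bar>phi s\<bar>) = integral {0..Ts} (\<lambda>s. Uc s * phi s)"
    by (rule integral_cong) (simp add: U_phi)
  also have "\<dots> = cos hh * \<gamma>" by (rule phi_dual[OF U_adm U_steers])
  finally show ?thesis .
qed

lemma absphi_cont: "continuous_on A (\<lambda>s. \<bar>phi s\<bar>)"
  using phi_cont by (intro continuous_intros) (auto intro: continuous_on_subset)

lemma sw2_lt: "sw_time \<rho> \<gamma> \<tau> (2*\<rho>) < Ts"
  using ste_even[of \<rho>] r t0 by (simp add: Ts_def algebra_simps)

lemma lower:
  assumes T': "0 \<le> T'" "T' < Ts" and adm: "admissible v" and st: "steers v T' (vector [0,0,0]) (vector [\<gamma>,0,\<gamma>])"
  shows False
proof -
  have vm: "v \<in> borel_measurable lebesgue" and vb: "\<And>s. \<bar>v s\<bar> \<le> 1"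
    using adm by (auto simp: admissible_def)
  have A: "integral {0..T'} (\<lambda>s. v s * phi s) = cos hh * \<gamma>" by (rule phi_dual[OF adm st])
  have iv: "(\<lambda>s. v s * phi s) integrable_on {0..T'}" using vint_HK(1)[OF vm vb phi_cont] .
  have ia: "(\<lambda>s. \<bar>phi s\<bar>) integrable_on {a..b}" for a b
    by (rule integrable_continuous_interval) (rule absphi_cont)
  have B: "integral {0..T'} (\<lambda>s. v s * phi s) \<le> integral {0..T'} (\<lambda>s. \<bar>phi s\<bar>)"
  proof (rule integral_le[OF iv ia])
    fix s
    have "v s * phi s \<le> \<bar>v s\<bar> * \<bar>phi s\<bar>" by (metis abs_ge_self abs_mult)
    also have "\<dots> \<le> 1 * \<bar>phi s\<bar>" using vb[of s] by (intro mult_right_mono) auto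
    finally show "v s * phi s \<le> \<bar>phi s\<bar>" by simp
  qed
  have D: "integral {0..T'} (\<lambda>s. \<bar>phi s\<bar>) + integral {T'..Ts} (\<lambda>s. \<bar>phi s\<bar>) = integral {0..Ts} (\<lambda>s. \<bar>phi s\<bar>)"
    by (rule Henstock_Kurzweil_Integration.integral_combine[OF _ _ ia]) (use T' in auto)
  have le: "integral {T'..Ts} (\<lambda>s. \<bar>phi s\<bar>) \<le> 0" using A B D absphi_int by linarith
  have ge: "integral {T'..Ts} (\<lambda>s. \<bar>phi s\<bar>) \<ge> 0" by (rule integral_nonneg[OF ia]) simp
  have "\<forall>x\<in>{T'..Ts}. \<bar>phi x\<bar> = 0"
    using integral_eq_0_iff[OF absphi_cont T'(2)] le ge by simp
  moreover define p where "p = (max T' (sw_time \<rho> \<gamma> \<tau> (2*\<rho>)) + Ts) / 2"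
  have p1: "sw_time \<rho> \<gamma> \<tau> (2*\<rho>) < p" "p < Ts" "T' \<le> p" using sw2_lt T' by (auto simp: p_def)
  have "phi p \<noteq> 0" using piece[of "2*\<rho>+1" p] p1 sw_time_last by simp
  ultimately show False using p1 by auto
qed

lemma uniq:
  assumes adm: "admissible v" and st: "steers v Ts (vector [0,0,0]) (vector [\<gamma>,0,\<gamma>])"
    and j: "j \<in> {1..2*\<rho>+1}"
  shows "AE t in lborel. sw_time \<rho> \<gamma> \<tau> (j-1) < t \<and> t < sw_time \<rho> \<gamma> \<tau> j \<longrightarrow> v t = (-1)^(j-1)"
proof -
  have vm: "v \<in> borel_measurable lebesgue" and vb: "\<And>s. \<bar>v s\<bar> \<le> 1"
    using adm by (auto simp: admissible_def)
  define f where "f = (\<lambda>s. \<bar>phi s\<bar> - v s * phi s)"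
  have iv: "(\<lambda>s. v s * phi s) integrable_on {0..Ts}" using vint_HK(1)[OF vm vb phi_cont] .
  have ia: "(\<lambda>s. \<bar>phi s\<bar>) integrable_on {0..Ts}"
    by (rule integrable_continuous_interval) (rule absphi_cont)
  have fz: "integral {0..Ts} f = 0"
    unfolding f_def using integral_diff[OF ia iv] absphi_int phi_dual[OF adm st] by simp
  have fle: "v s * phi s \<le> \<bar>phi s\<bar>" for s
  proof -
    have "v s * phi s \<le> \<bar>v s\<bar> * \<bar>phi s\<bar>" by (metis abs_ge_self abs_mult)
    also have "\<dots> \<le> 1 * \<bar>phi s\<bar>" using vb[of s] by (intro mult_right_mono) auto
    finally show ?thesis by simp
  qed
  have phib: "\<bar>phi s\<bar> \<le> 2" for s
    unfolding phi_def using abs_triangle_ineq4[of "cos hh" "cos (s - (\<tau> + hh))"] abs_cos_le_one[of hh] abs_cos_le_one[of "s - (\<tau> + hh)"] by linarith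
  have fb: "\<bar>f s\<bar> \<le> 4" for s
  proof -
    have "\<bar>v s * phi s\<bar> \<le> 2" using vb[of s] phib[of s] by (simp add: abs_mult) (metis mult_le_one[of "\<bar>v s\<bar>" "\<bar>phi s\<bar> / 2"] abs_ge_zero mult.commute order_trans mult_right_le_one_le) 
    then show ?thesis unfolding f_def using phib[of s] by linarith
  qed
  have fm: "f \<in> borel_measurable lebesgue"
    unfolding f_def using vm cont_meas[OF phi_cont] by measurable
  have si: "set_integrable lebesgue {0..Ts} f" by (rule seti_bounded[OF fm fb])
  have AE: "AE s in lborel. s \<in> {0..Ts} \<longrightarrow> f s = 0"
    by (rule AEz[OF si _ fz]) (simp add: f_def fle)
  show ?thesis
    using AE
  proof eventually_elim
    case (elim t)
    show ?case
    proof
      assume tt: "sw_time \<rho> \<gamma> \<tau> (j-1) < t \<and> t < sw_time \<rho> \<gamma> \<tau> j"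
      have P: "0 < t \<and> t < Ts \<and> Uc t = (-1)^(j-1) \<and> phi t \<noteq> 0" using piece[OF j] tt by blast
      then have "f t = 0" using elim by auto
      then have "v t * phi t = Uc t * phi t" using U_phi[of t] P by (simp add: f_def)
      then show "v t = (-1)^(j-1)" using P by simp
    qed
  qed
qed

end

theorem theorem4:
  fixes \<gamma> :: real
  assumes "\<gamma> > 0"
  shows
   "(\<forall>\<rho>::nat. \<rho> \<ge> 1 \<and> 2*(real \<rho> - 1)*pi < \<gamma> \<and> \<gamma> < 2*real \<rho>*pi \<longrightarrow>
      (\<exists>!\<tau>. 0 < \<tau> \<and> \<tau> < pi \<and>
          (2*\<tau> + 2*(real \<rho> - 1)*pi - \<gamma>) / (2*real \<rho> - 1) = 2 * arctan (sin \<tau> / (2*real \<rho> - cos \<tau>))) \<and>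
      (\<forall>\<tau>. 0 < \<tau> \<and> \<tau> < pi \<and>
          (2*\<tau> + 2*(real \<rho> - 1)*pi - \<gamma>) / (2*real \<rho> - 1) = 2 * arctan (sin \<tau> / (2*real \<rho> - cos \<tau>)) \<longrightarrow>
         (let T = (4*real \<rho>*(\<tau> + (real \<rho> - 1)*pi) - \<gamma>) / (2*real \<rho> - 1) in
           (\<forall>j\<in>{1..2*\<rho>+1}. sw_len \<rho> \<gamma> \<tau> j > 0) \<and>
           (\<forall>k\<in>{1..\<rho>-1}. sw_len \<rho> \<gamma> \<tau> (2*k+1) = 2*pi - sw_len \<rho> \<gamma> \<tau> (2*k+2)) \<and>
           sw_time \<rho> \<gamma> \<tau> (2*\<rho>+1) = T \<and>
           min_time T (vector [0, 0, 0]) (vector [\<gamma>, 0, \<gamma>]) \<and>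
           (\<exists>u. admissible u \<and> steers u T (vector [0, 0, 0]) (vector [\<gamma>, 0, \<gamma>]) \<and>
              (\<forall>j\<in>{1..2*\<rho>+1}. \<forall>t. sw_time \<rho> \<gamma> \<tau> (j-1) < t \<and> t < sw_time \<rho> \<gamma> \<tau> j
                  \<longrightarrow> u t = (-1) ^ (j-1))) \<and>
           (\<forall>v. admissible v \<and> steers v T (vector [0, 0, 0]) (vector [\<gamma>, 0, \<gamma>]) \<longrightarrow>
              (\<forall>j\<in>{1..2*\<rho>+1}. AE t in lborel.
                  sw_time \<rho> \<gamma> \<tau> (j-1) < t \<and> t < sw_time \<rho> \<gamma> \<tau> j \<longrightarrow> v t = (-1) ^ (j-1))))))
    \<and>
    (\<forall>\<rho>::nat. \<rho> \<ge> 1 \<and> \<gamma> = 2*real \<rho>*pi \<longrightarrow>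
       min_time (2*real \<rho>*pi) (vector [0, 0, 0]) (vector [\<gamma>, 0, \<gamma>]) \<and>
       admissible (\<lambda>t. 1) \<and>
       steers (\<lambda>t. 1) (2*real \<rho>*pi) (vector [0, 0, 0]) (vector [\<gamma>, 0, \<gamma>]) \<and>
       (\<forall>v. admissible v \<and> steers v (2*real \<rho>*pi) (vector [0, 0, 0]) (vector [\<gamma>, 0, \<gamma>]) \<longrightarrow>
          (AE t in lborel. 0 < t \<and> t < 2*real \<rho>*pi \<longrightarrow> v t = 1)))"
proof -
  have const_adm: "admissible (\<lambda>t. 1)"
    by (simp add: admissible_def)
  have P1: "\<forall>\<rho>::nat. \<rho> \<ge> 1 \<and> 2*(real \<rho> - 1)*pi < \<gamma> \<and> \<gamma> < 2*real \<rho>*pi \<longrightarrow>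
      (\<exists>!\<tau>. 0 < \<tau> \<and> \<tau> < pi \<and>
          (2*\<tau> + 2*(real \<rho> - 1)*pi - \<gamma>) / (2*real \<rho> - 1) = 2 * arctan (sin \<tau> / (2*real \<rho> - cos \<tau>))) \<and>
      (\<forall>\<tau>. 0 < \<tau> \<and> \<tau> < pi \<and>
          (2*\<tau> + 2*(real \<rho> - 1)*pi - \<gamma>) / (2*real \<rho> - 1) = 2 * arctan (sin \<tau> / (2*real \<rho> - cos \<tau>)) \<longrightarrow>
         (let T = (4*real \<rho>*(\<tau> + (real \<rho> - 1)*pi) - \<gamma>) / (2*real \<rho> - 1) in
           (\<forall>j\<in>{1..2*\<rho>+1}. sw_len \<rho> \<gamma> \<tau> j > 0) \<and>
           (\<forall>k\<in>{1..\<rho>-1}. sw_len \<rho> \<gamma> \<tau> (2*k+1) = 2*pi - sw_len \<rho> \<gamma> \<tau> (2*k+2)) \<and>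
           sw_time \<rho> \<gamma> \<tau> (2*\<rho>+1) = T \<and>
           min_time T (vector [0, 0, 0]) (vector [\<gamma>, 0, \<gamma>]) \<and>
           (\<exists>u. admissible u \<and> steers u T (vector [0, 0, 0]) (vector [\<gamma>, 0, \<gamma>]) \<and>
              (\<forall>j\<in>{1..2*\<rho>+1}. \<forall>t. sw_time \<rho> \<gamma> \<tau> (j-1) < t \<and> t < sw_time \<rho> \<gamma> \<tau> j
                  \<longrightarrow> u t = (-1) ^ (j-1))) \<and>
           (\<forall>v. admissible v \<and> steers v T (vector [0, 0, 0]) (vector [\<gamma>, 0, \<gamma>]) \<longrightarrow>
              (\<forall>j\<in>{1..2*\<rho>+1}. AE t in lborel.
                  sw_time \<rho> \<gamma> \<tau> (j-1) < t \<and> t < sw_time \<rho> \<gamma> \<tau> j \<longrightarrow> v t = (-1) ^ (j-1)))))"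
  proof (intro allI impI conjI)
    fix \<rho> :: nat
    assume H: "\<rho> \<ge> 1 \<and> 2*(real \<rho> - 1)*pi < \<gamma> \<and> \<gamma> < 2*real \<rho>*pi"
    show "\<exists>!\<tau>. 0 < \<tau> \<and> \<tau> < pi \<and>
          (2*\<tau> + 2*(real \<rho> - 1)*pi - \<gamma>) / (2*real \<rho> - 1) = 2 * arctan (sin \<tau> / (2*real \<rho> - cos \<tau>))"
      using H by (intro tau_exists_unique) auto
    fix \<tau> :: real
    assume Ht: "0 < \<tau> \<and> \<tau> < pi \<and>
          (2*\<tau> + 2*(real \<rho> - 1)*pi - \<gamma>) / (2*real \<rho> - 1) = 2 * arctan (sin \<tau> / (2*real \<rho> - cos \<tau>))"
    interpret S: sol \<rho> \<gamma> \<tau> using H Ht by unfold_locales auto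
    have TT: "(4*real \<rho>*(\<tau> + (real \<rho> - 1)*pi) - \<gamma>) / (2*real \<rho> - 1) = S.Ts"
      using S.Ts_eq by simp
    show "let T = (4*real \<rho>*(\<tau> + (real \<rho> - 1)*pi) - \<gamma>) / (2*real \<rho> - 1) in
           (\<forall>j\<in>{1..2*\<rho>+1}. sw_len \<rho> \<gamma> \<tau> j > 0) \<and>
           (\<forall>k\<in>{1..\<rho>-1}. sw_len \<rho> \<gamma> \<tau> (2*k+1) = 2*pi - sw_len \<rho> \<gamma> \<tau> (2*k+2)) \<and>
           sw_time \<rho> \<gamma> \<tau> (2*\<rho>+1) = T \<and>
           min_time T (vector [0, 0, 0]) (vector [\<gamma>, 0, \<gamma>]) \<and>
           (\<exists>u. admissible u \<and> steers u T (vector [0, 0, 0]) (vector [\<gamma>, 0, \<gamma>]) \<and>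
              (\<forall>j\<in>{1..2*\<rho>+1}. \<forall>t. sw_time \<rho> \<gamma> \<tau> (j-1) < t \<and> t < sw_time \<rho> \<gamma> \<tau> j
                  \<longrightarrow> u t = (-1) ^ (j-1))) \<and>
           (\<forall>v. admissible v \<and> steers v T (vector [0, 0, 0]) (vector [\<gamma>, 0, \<gamma>]) \<longrightarrow>
              (\<forall>j\<in>{1..2*\<rho>+1}. AE t in lborel.
                  sw_time \<rho> \<gamma> \<tau> (j-1) < t \<and> t < sw_time \<rho> \<gamma> \<tau> j \<longrightarrow> v t = (-1) ^ (j-1)))"
      unfolding Let_def TT
    proof (intro conjI ballI allI impI)
      fix j assume "j \<in> {1..2*\<rho>+1}"
      show "sw_len \<rho> \<gamma> \<tau> j > 0" using S.bet_bounds Ht by (simp add: S.sw_len_simp)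
    next
      fix k assume k: "k \<in> {1..\<rho>-1}"
      then have "2*k+1 \<noteq> 1" "2*k+1 \<noteq> 2*\<rho>+1" "2*k+2 \<noteq> 1" "2*k+2 \<noteq> 2*\<rho>+1" by auto
      then show "sw_len \<rho> \<gamma> \<tau> (2*k+1) = 2*pi - sw_len \<rho> \<gamma> \<tau> (2*k+2)"
        by (simp add: S.sw_len_simp)
    next
      show "sw_time \<rho> \<gamma> \<tau> (2*\<rho>+1) = S.Ts" by (rule S.sw_time_last)
    next
      show "min_time S.Ts (vector [0, 0, 0]) (vector [\<gamma>, 0, \<gamma>])"
        unfolding min_time_def reachable_in_def
        using S.U_adm S.U_steers S.lower by blast
    next
      show "\<exists>u. admissible u \<and> steers u S.Ts (vector [0, 0, 0]) (vector [\<gamma>, 0, \<gamma>]) \<and>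
              (\<forall>j\<in>{1..2*\<rho>+1}. \<forall>t. sw_time \<rho> \<gamma> \<tau> (j-1) < t \<and> t < sw_time \<rho> \<gamma> \<tau> j
                  \<longrightarrow> u t = (-1) ^ (j-1))"
        using S.U_adm S.U_steers S.piece by blast
    next
      fix v j assume "admissible v \<and> steers v S.Ts (vector [0, 0, 0]) (vector [\<gamma>, 0, \<gamma>])" "j \<in> {1..2*\<rho>+1}"
      then show "AE t in lborel. sw_time \<rho> \<gamma> \<tau> (j-1) < t \<and> t < sw_time \<rho> \<gamma> \<tau> j \<longrightarrow> v t = (-1) ^ (j-1)"
        using S.uniq by blast
    qed
  qed
  have P2: "\<forall>\<rho>::nat. \<rho> \<ge> 1 \<and> \<gamma> = 2*real \<rho>*pi \<longrightarrow>
       min_time (2*real \<rho>*pi) (vector [0, 0, 0]) (vector [\<gamma>, 0, \<gamma>]) \<and>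
       admissible (\<lambda>t. 1) \<and>
       steers (\<lambda>t. 1) (2*real \<rho>*pi) (vector [0, 0, 0]) (vector [\<gamma>, 0, \<gamma>]) \<and>
       (\<forall>v. admissible v \<and> steers v (2*real \<rho>*pi) (vector [0, 0, 0]) (vector [\<gamma>, 0, \<gamma>]) \<longrightarrow>
          (AE t in lborel. 0 < t \<and> t < 2*real \<rho>*pi \<longrightarrow> v t = 1))"
  proof (intro allI impI)
    fix \<rho> :: nat
    assume H: "\<rho> \<ge> 1 \<and> \<gamma> = 2*real \<rho>*pi"
    define T0 where "T0 = 2*real \<rho>*pi"
    have T0: "0 \<le> T0" by (simp add: T0_def)
    have g: "\<gamma> = T0" using H by (simp add: T0_def)
    have d1: "\<And>x. ((\<lambda>x. x) has_real_derivative 1) (at x)" by (auto intro!: derivative_eq_intros)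
    have d2: "\<And>x. (sin has_real_derivative cos x) (at x)" by (auto intro!: derivative_eq_intros)
    have d3: "\<And>x. ((\<lambda>x. - cos x) has_real_derivative sin x) (at x)" by (auto intro!: derivative_eq_intros)
    have st: "steers (\<lambda>t. 1) T0 (vector [0, 0, 0]) (vector [\<gamma>, 0, \<gamma>])"
    proof (rule construct)
      show "integral {0..T0} (\<lambda>t. 1) = \<gamma>" using hasint[OF T0 d1] g by simp
      show "integral {0..T0} (\<lambda>s. 1 * cos s) = 0" using hasint[OF T0 d2] by (simp add: T0_def)
      show "integral {0..T0} (\<lambda>s. 1 * sin s) = 0" using hasint[OF T0 d3] by (simp add: T0_def)
    qed (use T0 in auto)
    have low: False if T': "0 \<le> T'" "T' < T0" and adm: "admissible v"
      and stv: "steers v T' (vector [0, 0, 0]) (vector [\<gamma>, 0, \<gamma>])" for T' v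
    proof -
      have vm: "v \<in> borel_measurable lebesgue" and vb: "\<And>s. \<bar>v s\<bar> \<le> 1"
        using adm by (auto simp: admissible_def)
      have "integral {0..T'} v = \<gamma>" using moments[OF adm stv] by simp
      moreover have "integral {0..T'} v \<le> integral {0..T'} (\<lambda>s. 1::real)"
        by (rule integral_le) (use vint_HK(1)[OF vm vb, of "\<lambda>_. 1"] vb in \<open>auto simp: abs_le_iff\<close>)
      moreover have "integral {0..T'} (\<lambda>s. 1::real) = T'" using hasint[OF T'(1) d1] by simp
      ultimately show False using T' g by linarith
    qed
    have un: "AE t in lborel. 0 < t \<and> t < T0 \<longrightarrow> v t = 1"
      if adm: "admissible v" and stv: "steers v T0 (vector [0, 0, 0]) (vector [\<gamma>, 0, \<gamma>])" for v
    proof -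
      have vm: "v \<in> borel_measurable lebesgue" and vb: "\<And>s. \<bar>v s\<bar> \<le> 1"
        using adm by (auto simp: admissible_def)
      have iv: "v integrable_on {0..T0}" using vint_HK(1)[OF vm vb, of "\<lambda>_. 1"] by simp
      have i1: "(\<lambda>s. 1::real) integrable_on {0..T0}" by (rule integrable_continuous_interval) (rule continuous_on_const)
      have z: "integral {0..T0} (\<lambda>s. 1 - v s) = 0"
        using integral_diff[OF i1 iv] moments[OF adm stv] hasint[OF T0 d1] g by simp
      have fm: "(\<lambda>s. 1 - v s) \<in> borel_measurable lebesgue" using vm by measurable
      have si: "set_integrable lebesgue {0..T0} (\<lambda>s. 1 - v s)"
        by (rule seti_bounded[OF fm, of _ _ 2]) (use vb in \<open>auto simp: abs_le_iff\<close>)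
      have "AE s in lborel. s \<in> {0..T0} \<longrightarrow> 1 - v s = 0"
        by (rule AEz[OF si _ z]) (use vb in \<open>auto simp: abs_le_iff\<close>)
      then show ?thesis by eventually_elim auto
    qed
    show "min_time (2*real \<rho>*pi) (vector [0, 0, 0]) (vector [\<gamma>, 0, \<gamma>]) \<and>
       admissible (\<lambda>t. 1) \<and>
       steers (\<lambda>t. 1) (2*real \<rho>*pi) (vector [0, 0, 0]) (vector [\<gamma>, 0, \<gamma>]) \<and>
       (\<forall>v. admissible v \<and> steers v (2*real \<rho>*pi) (vector [0, 0, 0]) (vector [\<gamma>, 0, \<gamma>]) \<longrightarrow>
          (AE t in lborel. 0 < t \<and> t < 2*real \<rho>*pi \<longrightarrow> v t = 1))"
      unfolding T0_def[symmetric] min_time_def reachable_in_def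
      using const_adm st low un by blast
  qed
  show ?thesis using P1 P2 by blast
qed

end
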